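(* For every positive integer $i$ there is a polynomial $R_i$ such that for every finite loopless multigraph $G$ and every standard fraternal completion of an orientation of $G$ of depth at least $i$, $$\Delta^-(\vec H_i)\le R_i\big(\widetilde\nabla^{\rm m}_{(i-1)/2}(G)\big).$$
   Context: A fraternal completion of a loopless directed multigraph $\vec G$ of depth $a$ is a triple $\mathfrak f=((E_1,\dots,E_a),w,\kappa)$ such that: $E_1=E(\vec G)$; for $2\le i\le a$, $E_i$ is the arc set of a directed multigraph with vertex set $V(\vec G)$; the sets $E_i$ are pairwise disjoint; $w(e)=i$ iff $e\in E_i$; $\kappa$ maps each $e\in\bigcup_{1<i\le a}E_i$ to a pair $(f,g)$ of arcs in $\bigcup_{i\le a}E_i$ with ${\rm tail}(f)\ne{\rm tail}(g)$, $w(e)=w(f)+w(g)$, ${\rm tail}(e)={\rm tail}(f)$, ${\rm head}(e)={\rm tail}(g)$, ${\rm head}(f)={\rm head}(g)$; and conversely for all $f\in E_i,g\in E_j$ with $i+j\le a$, ${\rm tail}(f)\ne{\rm tail}(g)$, ${\rm head}(f)={\rm head}(g)$ there is a unique $e\in E_{i+j}$ with $\kappa(e)\in\{(f,g),(g,f)\}$. $\vec H_i=(V(\vec G),E_i)$, $H_i$ is its underlying undirected multigraph, and $\Delta^-$ is maximum in-degree. A standard fraternal completion of depth $p$ of an orientation of $G$ is one built as follows: $\vec H_1=\vec G$ is an orientation of $G$ with $\Delta^-(\vec G)=\lceil\widetilde\nabla^{\rm m}_0(G)\rceil$; for $i<p$, the depth-$i$ completion is extended to depth $i+1$ (the underlying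 multigraph $H_{i+1}$ being determined by the previous levels) by choosing, for each new arc $e$, between $\kappa(e)=(f,g)$ and $\kappa(e)=(g,f)$ so that $\Delta^-(\vec H_{i+1})=\lceil\widetilde\nabla^{\rm m}_0(H_{i+1})\rceil$. For a half-integer $r\ge0$, $\widetilde\nabla^{\rm m}_r(G)$ is the maximum of $\|H\|/|H|$ over loopless multigraphs $H$ such that some $\le 2r$-subdivision of $H$ (each edge replaced by a path with at most $2r$ internal vertices, paths internally disjoint) is a subgraph of $G$; $\|H\|$ counts edges with multiplicity. *)

theory Defs
  imports "HOL-Computational_Algebra.Polynomial"
begin

definition loopless_multigraph :: "'v set \<Rightarrow> 'e set \<Rightarrow> ('e \<Rightarrow> 'v set) \<Rightarrow> bool" where
  "loopless_multigraph V E ends \<longleftrightarrow>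
     finite V \<and> finite E \<and> (\<forall>e\<in>E. ends e \<subseteq> V \<and> card (ends e) = 2)"

definition is_orientation :: "'e set \<Rightarrow> ('e \<Rightarrow> 'v set) \<Rightarrow> ('e \<Rightarrow> 'v) \<Rightarrow> ('e \<Rightarrow> 'v) \<Rightarrow> bool" where
  "is_orientation E ends t h \<longleftrightarrow> (\<forall>e\<in>E. ends e = {t e, h e})"

definition interior :: "'a list \<Rightarrow> 'a list" where
  "interior xs = butlast (tl xs)"

text \<open>A (\<le> 2r)-subdivision of a loopless multigraph H with vertex set B and m edges
  (edge k realised by the path with vertex list P k and edge list Q k in G)
  is a subgraph of G = (V,E,ends).\<close>
definition subdiv_in :: "'v set \<Rightarrow> 'e set \<Rightarrow> ('e \<Rightarrow> 'v set) \<Rightarrow> real \<Rightarrow>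
    'v set \<Rightarrow> nat \<Rightarrow> (nat \<Rightarrow> 'v list) \<Rightarrow> (nat \<Rightarrow> 'e list) \<Rightarrow> bool" where
  "subdiv_in V E ends r B m P Q \<longleftrightarrow>
     B \<subseteq> V \<and>
     (\<forall>k<m. length (P k) \<ge> 2 \<and> distinct (P k) \<and> set (P k) \<subseteq> V \<and>
        length (Q k) = length (P k) - 1 \<and>
        (\<forall>j<length (Q k). Q k ! j \<in> E \<and> ends (Q k ! j) = {P k ! j, P k ! Suc j}) \<and>
        hd (P k) \<in> B \<and> last (P k) \<in> B \<and> set (interior (P k)) \<inter> B = {} \<and>
        real (length (interior (P k))) \<le> 2 * r) \<and>
     (\<forall>k<m. \<forall>k'<m. k \<noteq> k' \<longrightarrow>
        set (interior (P k)) \<inter> set (interior (P k')) = {} \<and> set (Q k) \<inter> set (Q k') = {})"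

text \<open>The multigraph topological greatest reduced average density
  (max over H of ||H|| / |H|; the 0 only matters for the empty graph).\<close>
definition tgrad_m :: "'v set \<Rightarrow> 'e set \<Rightarrow> ('e \<Rightarrow> 'v set) \<Rightarrow> real \<Rightarrow> real" where
  "tgrad_m V E ends r = Sup (insert 0
     {real m / real (card B) | B m P Q. B \<noteq> {} \<and> subdiv_in V E ends r B m P Q})"

definition max_indeg :: "'v set \<Rightarrow> 'e set \<Rightarrow> ('e \<Rightarrow> 'v) \<Rightarrow> nat" where
  "max_indeg V A h = Max (insert 0 ((\<lambda>v. card {e\<in>A. h e = v}) ` V))"

text \<open>Fraternal completion ((Es 1,...,Es a), w, \<kappa>) of depth a of the directed multigraph
  (V, A, t, h); the weight w is encoded by membership in the levels Es i.\<close>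
definition fraternal_completion :: "'v set \<Rightarrow> ('e \<Rightarrow> 'v) \<Rightarrow> ('e \<Rightarrow> 'v) \<Rightarrow> 'e set \<Rightarrow>
    (nat \<Rightarrow> 'e set) \<Rightarrow> ('e \<Rightarrow> 'e \<times> 'e) \<Rightarrow> nat \<Rightarrow> bool" where
  "fraternal_completion V t h A Es \<kappa> a \<longleftrightarrow>
     Es 1 = A \<and>
     (\<forall>i\<in>{1..a}. finite (Es i) \<and> (\<forall>e\<in>Es i. t e \<in> V \<and> h e \<in> V)) \<and>
     (\<forall>i\<in>{1..a}. \<forall>j\<in>{1..a}. i \<noteq> j \<longrightarrow> Es i \<inter> Es j = {}) \<and>
     (\<forall>i\<in>{2..a}. \<forall>e\<in>Es i. \<exists>j k f g. 1 \<le> j \<and> 1 \<le> k \<and> j + k = i \<and>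
        f \<in> Es j \<and> g \<in> Es k \<and> \<kappa> e = (f, g) \<and> t f \<noteq> t g \<and>
        t e = t f \<and> h e = t g \<and> h f = h g) \<and>
     (\<forall>i j f g. 1 \<le> i \<and> 1 \<le> j \<and> i + j \<le> a \<and> f \<in> Es i \<and> g \<in> Es j \<and>
        t f \<noteq> t g \<and> h f = h g \<longrightarrow>
        (\<exists>!e. e \<in> Es (i + j) \<and> (\<kappa> e = (f, g) \<or> \<kappa> e = (g, f))))"

definition standard_fc :: "'v set \<Rightarrow> 'e set \<Rightarrow> ('e \<Rightarrow> 'v set) \<Rightarrow> ('e \<Rightarrow> 'v) \<Rightarrow> ('e \<Rightarrow> 'v) \<Rightarrow>
    (nat \<Rightarrow> 'e set) \<Rightarrow> ('e \<Rightarrow> 'e \<times> 'e) \<Rightarrow> nat \<Rightarrow> bool" where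
  "standard_fc V EG ends t h Es \<kappa> p \<longleftrightarrow>
     loopless_multigraph V EG ends \<and> is_orientation EG ends t h \<and>
     fraternal_completion V t h EG Es \<kappa> p \<and>
     (\<forall>i\<in>{1..p}. int (max_indeg V (Es i) h) = \<lceil>tgrad_m V (Es i) (\<lambda>e. {t e, h e}) 0\<rceil>)"

end

theory Submission
  imports Defs
begin


fun iswalk :: "'e set \<Rightarrow> ('e \<Rightarrow> 'v set) \<Rightarrow> 'v list \<Rightarrow> 'e list \<Rightarrow> bool" where
  "iswalk E en [v] [] = True"
| "iswalk E en (u # v # ws) (e # es) = (e \<in> E \<and> en e = {u, v} \<and> iswalk E en (v # ws) es)"
| "iswalk E en _ _ = False"

lemma iswalk_length: "iswalk E en ws es \<Longrightarrow> length ws = Suc (length es)"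
  by (induction E en ws es rule: iswalk.induct) auto

lemma iswalk_nonempty: "iswalk E en ws es \<Longrightarrow> ws \<noteq> []"
  by (induction E en ws es rule: iswalk.induct) auto

lemma iswalk_append:
  "iswalk E en (xs @ [v]) es1 \<Longrightarrow> iswalk E en (v # ys) es2 \<Longrightarrow> iswalk E en (xs @ v # ys) (es1 @ es2)"
proof (induction xs arbitrary: es1)
  case Nil
  then show ?case by (cases es1) auto
next
  case (Cons a xs)
  then show ?case
    by (cases xs; cases es1) auto
qed

lemma iswalk_split:
  "iswalk E en (xs @ v # ys) es \<Longrightarrow>
     iswalk E en (xs @ [v]) (take (length xs) es) \<and> iswalk E en (v # ys) (drop (length xs) es)"
proof (induction xs arbitrary: es)
  case Nil
  then show ?case by (cases ys; cases es) auto
next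
  case (Cons a xs)
  then show ?case
    by (cases xs; cases es) auto
qed

lemma iswalk_rev:
  assumes "\<And>e u v. en e = {u, v} \<Longrightarrow> en e = {v, u}"
  shows "iswalk E en ws es \<Longrightarrow> iswalk E en (rev ws) (rev es)"
proof (induction E en ws es rule: iswalk.induct)
  case (2 E en u v ws e es)
  then have "iswalk E en (rev ws @ [v]) (rev es)" by simp
  moreover have "iswalk E en [v, u] [e]" using 2 by (auto simp: insert_commute)
  ultimately have "iswalk E en (rev ws @ v # [u]) (rev es @ [e])"
    using iswalk_append by fastforce
  then show ?case by simp
qed auto

lemma iswalk_nth:
  "iswalk E en ws es \<Longrightarrow> \<forall>j<length es. es ! j \<in> E \<and> en (es ! j) = {ws ! j, ws ! Suc j}"
proof (induction E en ws es rule: iswalk.induct)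
  case (2 E en u v ws e es)
  then show ?case
    by (auto simp: nth_Cons split: nat.splits)
qed auto

lemma iswalk_edge_ends:
  "iswalk E en ws es \<Longrightarrow> e \<in> set es \<Longrightarrow> e \<in> E \<and> en e \<subseteq> set ws"
  by (induction E en ws es rule: iswalk.induct) auto

lemma iswalk_set:
  "iswalk E en ws es \<Longrightarrow> es \<noteq> [] \<Longrightarrow> \<forall>e\<in>E. en e \<subseteq> V \<Longrightarrow> set ws \<subseteq> V"
proof (induction E en ws es rule: iswalk.induct)
  case (2 E en u v ws e es)
  then show ?case by (cases es; cases ws) auto
qed auto

lemma iswalk_short:
  "iswalk E en ws es \<Longrightarrow> \<exists>ps qs. iswalk E en ps qs \<and> distinct ps \<and> hd ps = hd ws \<and>
      last ps = last ws \<and> set ps \<subseteq> set ws \<and> set qs \<subseteq> set es"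
proof (induction ws arbitrary: es)
  case Nil
  then show ?case by simp
next
  case (Cons x rest)
  show ?case
  proof (cases rest)
    case Nil
    then show ?thesis using Cons.prems by (intro exI[of _ "[x]"] exI[of _ "[]"]) auto
  next
    case (Cons y rest')
    with Cons.prems obtain e0 es' where es: "es = e0 # es'" and e0: "e0 \<in> E" "en e0 = {x, y}"
      and w: "iswalk E en rest es'"
      by (cases es) auto
    from Cons.IH[OF w] obtain ps qs where ps: "iswalk E en ps qs" "distinct ps" "hd ps = hd rest"
      "last ps = last rest" "set ps \<subseteq> set rest" "set qs \<subseteq> set es'" by blast
    have psne: "ps \<noteq> []" using ps(1) iswalk_nonempty by blast
    show ?thesis
    proof (cases "x \<in> set ps")
      case False
      obtain ps' where pse: "ps = y # ps'" using psne ps(3) Cons by (cases ps) auto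
      have "iswalk E en (x # ps) (e0 # qs)" using pse ps(1) e0 by simp
      then show ?thesis using False ps psne es Cons
        by (intro exI[of _ "x # ps"] exI[of _ "e0 # qs"]) auto
    next
      case True
      then obtain pre post where pp: "ps = pre @ x # post" by (meson split_list)
      from iswalk_split[of E en pre x post qs] ps(1) pp
      have w2: "iswalk E en (x # post) (drop (length pre) qs)" by simp
      have "set (drop (length pre) qs) \<subseteq> set qs" by (rule set_drop_subset)
      moreover have "last (x # post) = last ps" using pp by simp
      moreover have "distinct (x # post)" using ps(2) pp by simp
      moreover have "set (x # post) \<subseteq> set (x # rest)" using ps(5) pp by auto
      ultimately show ?thesis using w2 ps es Cons
        by (intro exI[of _ "x # post"] exI[of _ "drop (length pre) qs"]) auto
    qed
  qed
qed

lemma iswalk_cut: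
  "iswalk E en (x # ws) es \<Longrightarrow> ws \<noteq> [] \<Longrightarrow> last ws \<in> B \<Longrightarrow>
    \<exists>ws' zs. ws = ws' @ zs \<and> ws' \<noteq> [] \<and> last ws' \<in> B \<and> set (butlast ws') \<inter> B = {}"
proof (induction ws arbitrary: x es)
  case Nil
  then show ?case by simp
next
  case (Cons v rest)
  show ?case
  proof (cases "v \<in> B \<or> rest = []")
    case True
    then show ?thesis using Cons.prems by (intro exI[of _ "[v]"] exI[of _ rest]) auto
  next
    case False
    from Cons.prems obtain e0 es' where "iswalk E en (v # rest) es'" by (cases es) auto
    from Cons.IH[OF this] False Cons.prems obtain ws' zs where
      "rest = ws' @ zs" "ws' \<noteq> []" "last ws' \<in> B" "set (butlast ws') \<inter> B = {}" by auto
    then show ?thesis using False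
      by (intro exI[of _ "v # ws'"] exI[of _ zs]) auto
  qed
qed




locale sfc =
  fixes V :: "'v set" and EG :: "'e set" and ends :: "'e \<Rightarrow> 'v set"
    and t h :: "'e \<Rightarrow> 'v" and Es :: "nat \<Rightarrow> 'e set" and \<kappa> :: "'e \<Rightarrow> 'e \<times> 'e" and p :: nat
  assumes sfc: "standard_fc V EG ends t h Es \<kappa> p"
begin

lemma lm: "loopless_multigraph V EG ends" using sfc by (simp add: standard_fc_def)
lemma finV: "finite V" using lm by (simp add: loopless_multigraph_def)
lemma finEG: "finite EG" using lm by (simp add: loopless_multigraph_def)
lemma endsV: "e \<in> EG \<Longrightarrow> ends e \<subseteq> V" using lm by (simp add: loopless_multigraph_def)
lemma orient: "e \<in> EG \<Longrightarrow> ends e = {t e, h e}" using sfc by (simp add: standard_fc_def is_orientation_def)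
lemma fc: "fraternal_completion V t h EG Es \<kappa> p" using sfc by (simp add: standard_fc_def)
lemma Es1: "Es 1 = EG" using fc by (simp add: fraternal_completion_def)
lemma finEs: "1 \<le> i \<Longrightarrow> i \<le> p \<Longrightarrow> finite (Es i)" using fc by (simp add: fraternal_completion_def)
lemma EsV: "1 \<le> i \<Longrightarrow> i \<le> p \<Longrightarrow> e \<in> Es i \<Longrightarrow> t e \<in> V \<and> h e \<in> V"
  using fc by (simp add: fraternal_completion_def)
lemma decomp: "2 \<le> i \<Longrightarrow> i \<le> p \<Longrightarrow> e \<in> Es i \<Longrightarrow> \<exists>j k f g. 1 \<le> j \<and> 1 \<le> k \<and> j + k = i \<and>
        f \<in> Es j \<and> g \<in> Es k \<and> \<kappa> e = (f, g) \<and> t f \<noteq> t g \<and>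
        t e = t f \<and> h e = t g \<and> h f = h g"
  using fc unfolding fraternal_completion_def by auto
lemma uniq: "1 \<le> i \<Longrightarrow> 1 \<le> j \<Longrightarrow> i + j \<le> p \<Longrightarrow> f \<in> Es i \<Longrightarrow> g \<in> Es j \<Longrightarrow>
        t f \<noteq> t g \<Longrightarrow> h f = h g \<Longrightarrow>
        (\<exists>!e. e \<in> Es (i + j) \<and> (\<kappa> e = (f, g) \<or> \<kappa> e = (g, f)))"
  using fc unfolding fraternal_completion_def by blast
lemma stdeq: "1 \<le> i \<Longrightarrow> i \<le> p \<Longrightarrow> int (max_indeg V (Es i) h) = \<lceil>tgrad_m V (Es i) (\<lambda>e. {t e, h e}) 0\<rceil>"
  using sfc by (simp add: standard_fc_def)

lemma kappa_inj: "2 \<le> j \<Longrightarrow> j \<le> p \<Longrightarrow> e \<in> Es j \<Longrightarrow> e' \<in> Es j \<Longrightarrow> \<kappa> e = \<kappa> e' \<Longrightarrow> e = e'"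
proof -
  assume a: "2 \<le> j" "j \<le> p" "e \<in> Es j" "e' \<in> Es j" "\<kappa> e = \<kappa> e'"
  from decomp[OF a(1,2,3)] obtain j1 k f g where d: "1 \<le> j1" "1 \<le> k" "j1 + k = j"
    "f \<in> Es j1" "g \<in> Es k" "\<kappa> e = (f, g)" "t f \<noteq> t g" "h f = h g" by blast
  from uniq[OF d(1,2) _ d(4,5,7,8)] d(3) a(2)
  have "\<exists>!e. e \<in> Es j \<and> (\<kappa> e = (f, g) \<or> \<kappa> e = (g, f))" by simp
  then show "e = e'" using a d by metis
qed

inductive rep :: "nat \<Rightarrow> 'e \<Rightarrow> 'v list \<Rightarrow> 'e list \<Rightarrow> bool" where
  rep1: "1 \<le> p \<Longrightarrow> e \<in> Es 1 \<Longrightarrow> rep 1 e [t e, h e] [e]"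
| rep2: "1 \<le> j1 \<Longrightarrow> 1 \<le> j2 \<Longrightarrow> j1 + j2 \<le> p \<Longrightarrow> e \<in> Es (j1 + j2) \<Longrightarrow> \<kappa> e = (f, g) \<Longrightarrow>
     h f = h g \<Longrightarrow> t e = t f \<Longrightarrow> h e = t g \<Longrightarrow>
     rep j1 f ws1 es1 \<Longrightarrow> rep j2 g ws2 es2 \<Longrightarrow>
     rep (j1 + j2) e (ws1 @ tl (rev ws2)) (es1 @ rev es2)"

lemma rep_props: "rep j e ws es \<Longrightarrow> e \<in> Es j \<and> 1 \<le> j \<and> j \<le> p \<and> length es = j \<and>
   iswalk EG ends ws es \<and> hd ws = t e \<and> last ws = h e \<and> length ws \<ge> 2"
proof (induction rule: rep.induct)
  case (rep1 e)
  then show ?case using Es1 orient by auto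
next
  case (rep2 j1 j2 e f g ws1 es1 ws2 es2)
  have sym: "\<And>e u v. ends e = {u, v} \<Longrightarrow> ends e = {v, u}" by (simp add: insert_commute)
  have w1: "iswalk EG ends ws1 es1" and w2: "iswalk EG ends ws2 es2" using rep2 by auto
  have w2r: "iswalk EG ends (rev ws2) (rev es2)" by (rule iswalk_rev[OF sym w2])
  have l1: "ws1 = butlast ws1 @ [h f]" using rep2 by (metis append_butlast_last_id list.size(3) not_numeral_le_zero)
  have l2: "rev ws2 = h f # tl (rev ws2)" using rep2
    by (metis hd_rev list.collapse list.size(3) not_numeral_le_zero rev_is_Nil_conv)
  have W0: "iswalk EG ends (butlast ws1 @ h f # tl (rev ws2)) (es1 @ rev es2)"
    using iswalk_append[of EG ends "butlast ws1" "h f" es1 "tl (rev ws2)" "rev es2"] w1 w2r l1 l2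
    by metis
  have EQ: "butlast ws1 @ h f # tl (rev ws2) = ws1 @ tl (rev ws2)"
    using l1 by (metis append.assoc append_Cons append_Nil)
  have "iswalk EG ends (ws1 @ tl (rev ws2)) (es1 @ rev es2)" using W0 EQ by simp
  moreover have "hd (ws1 @ tl (rev ws2)) = t e" using rep2 by (cases ws1) auto
  moreover have "last (ws1 @ tl (rev ws2)) = h e"
  proof -
    have ne2: "ws2 \<noteq> []" using rep2 by auto
    have ne: "tl (rev ws2) \<noteq> []" using rep2 by (cases "rev ws2") auto
    then have "last (ws1 @ tl (rev ws2)) = last (tl (rev ws2))" by simp
    also have "\<dots> = last (rev ws2)" using ne by (simp add: last_tl)
    also have "\<dots> = hd ws2" using ne2 by (simp add: last_rev)
    finally show ?thesis using rep2 by simp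
  qed
  ultimately show ?case using rep2 by auto
qed

end



lemma interior_app:
  assumes "length ws1 \<ge> 2" "length ws2 \<ge> 2"
  shows "set (interior (ws1 @ tl (rev ws2))) \<subseteq> set (interior ws1) \<union> {last ws1} \<union> set (interior ws2)"
proof -
  obtain a xs where w1: "ws1 = a # xs" using assms by (cases ws1) auto
  have xsne: "xs \<noteq> []" using assms w1 by auto
  obtain b ys where w2: "rev ws2 = b # ys" using assms by (cases "rev ws2") auto
  have "length (rev ws2) \<ge> 2" using assms by simp
  then have ysne: "ys \<noteq> []" using w2 by auto
  have "interior (ws1 @ tl (rev ws2)) = xs @ butlast ys" using w1 w2 ysne
    by (simp add: interior_def butlast_append)
  moreover have "set xs \<subseteq> set (interior ws1) \<union> {last ws1}"
  proof -
    have "xs = butlast xs @ [last xs]" using xsne by simp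
    then have "set xs = set (butlast xs) \<union> {last xs}" by (metis set_append empty_set list.set(2) Un_insert_right sup_bot.right_neutral)
    then show ?thesis using w1 xsne by (simp add: interior_def)
  qed
  moreover have "set (butlast ys) \<subseteq> set (interior ws2)"
  proof -
    have "ws2 = rev ys @ [b]" using w2 by (metis rev_rev_ident rev.simps(2))
    then have "interior ws2 = rev (butlast ys)" using ysne
      by (cases ys rule: rev_cases) (auto simp: interior_def)
    then show ?thesis by simp
  qed
  ultimately show ?thesis by auto
qed

lemma interior_sub: "set (interior ws) \<subseteq> set ws"
  unfolding interior_def by (cases ws) (auto dest: in_set_butlastD)

context sfc begin

lemma rep_exists: "1 \<le> j \<Longrightarrow> j \<le> p \<Longrightarrow> e \<in> Es j \<Longrightarrow> \<exists>ws es. rep j e ws es"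
proof (induction j arbitrary: e rule: less_induct)
  case (less j)
  show ?case
  proof (cases "j = 1")
    case True
    then show ?thesis using less rep1 by blast
  next
    case False
    with less.prems have "2 \<le> j" by simp
    from decomp[OF this less.prems(2,3)] obtain j1 k f g where d: "1 \<le> j1" "1 \<le> k" "j1 + k = j"
      "f \<in> Es j1" "g \<in> Es k" "\<kappa> e = (f, g)" "t f \<noteq> t g" "t e = t f" "h e = t g" "h f = h g" by blast
    from less.IH[of j1 f] d less.prems obtain ws1 es1 where r1: "rep j1 f ws1 es1" by auto
    from less.IH[of k g] d less.prems obtain ws2 es2 where r2: "rep k g ws2 es2" by auto
    have "rep (j1 + k) e (ws1 @ tl (rev ws2)) (es1 @ rev es2)"
      by (rule rep2) (use d less.prems r1 r2 in auto)
    then show ?thesis using d by auto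
  qed
qed

lemma rep_one: "rep 1 e ws es \<Longrightarrow> ws = [t e, h e] \<and> es = [e]"
  by (cases rule: rep.cases) auto

definition In :: "nat \<Rightarrow> 'v \<Rightarrow> 'e set" where
  "In L z = {f. \<exists>k. 1 \<le> k \<and> k < L \<and> f \<in> Es k \<and> h f = z}"
definition S :: "nat \<Rightarrow> 'v \<Rightarrow> 'e set" where
  "S j v = {e \<in> Es j. \<exists>ws es. rep j e ws es \<and> v \<in> set (interior ws)}"
definition A :: "nat \<Rightarrow> 'v \<Rightarrow> 'e set" where
  "A j v = {e. \<exists>k. 1 \<le> k \<and> k \<le> j \<and> e \<in> S k v}"
definition Msum :: "nat \<Rightarrow> nat" where
  "Msum L = (\<Sum>k\<in>{1..<L}. max_indeg V (Es k) h)"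

lemma indeg_le: "1 \<le> k \<Longrightarrow> k \<le> p \<Longrightarrow> card {f \<in> Es k. h f = z} \<le> max_indeg V (Es k) h"
proof (cases "z \<in> V")
  case True
  assume k: "1 \<le> k" "k \<le> p"
  show ?thesis unfolding max_indeg_def using True finV
    by (intro Max_ge) auto
next
  case False
  assume k: "1 \<le> k" "k \<le> p"
  then have "{f \<in> Es k. h f = z} = {}" using EsV False by auto
  then show ?thesis by (metis card.empty le0)
qed

lemma In_card: "L \<le> Suc p \<Longrightarrow> finite (In L z) \<and> card (In L z) \<le> Msum L"
proof -
  assume L: "L \<le> Suc p"
  have eq: "In L z = (\<Union>k\<in>{1..<L}. {f \<in> Es k. h f = z})" unfolding In_def by auto
  have fin: "finite (In L z)" unfolding eq using finEs L by auto
  have "card (In L z) \<le> (\<Sum>k\<in>{1..<L}. card {f \<in> Es k. h f = z})" unfolding eq by (rule card_UN_le) simp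
  also have "\<dots> \<le> Msum L" unfolding Msum_def using L by (intro sum_mono indeg_le) auto
  finally show ?thesis using fin by simp
qed

lemma S_sub: "S j v \<subseteq> Es j" unfolding S_def by auto

lemma A_fin: "j \<le> p \<Longrightarrow> finite (A j v)"
proof -
  assume "j \<le> p"
  then have "A j v \<subseteq> (\<Union>k\<in>{1..j}. Es k)" unfolding A_def using S_sub by fastforce
  moreover have "finite (\<Union>k\<in>{1..j}. Es k)" using finEs \<open>j \<le> p\<close> by auto
  ultimately show ?thesis by (rule finite_subset)
qed

lemma S_one: "S 1 v = {}"
proof -
  { fix e ws es assume "rep 1 e ws es"
    then have "ws = [t e, h e]" using rep_one by blast
    then have "set (interior ws) = {}" by (simp add: interior_def) }
  then show ?thesis unfolding S_def by fastforce
qed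

lemma S_kappa:
  assumes "2 \<le> j" "j \<le> L" "L \<le> p" "e \<in> S j v"
  shows "\<kappa> e \<in> (In L v \<times> In L v) \<union> Sigma (A (j - 1) v) (\<lambda>f. In L (h f))
              \<union> (\<lambda>(g, f). (f, g)) ` Sigma (A (j - 1) v) (\<lambda>g. In L (h g))"
proof -
  from assms(4) obtain ws es where r: "rep j e ws es" and v: "v \<in> set (interior ws)"
    unfolding S_def by auto
  from r show ?thesis
  proof (cases rule: rep.cases)
    case rep1
    then show ?thesis using v by (simp add: interior_def)
  next
    case (rep2 j1 j2 f g ws1 es1 ws2 es2)
    have rf: "rep j1 f ws1 es1" and rg: "rep j2 g ws2 es2" using rep2 by auto
    note pf = rep_props[OF rf] and pg = rep_props[OF rg]
    have fIn: "f \<in> In L (h f)" unfolding In_def using pf rep2 assms by auto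
    have gIn: "g \<in> In L (h f)" unfolding In_def using pg rep2 assms by auto
    from interior_app[of ws1 ws2] pf pg v rep2
    have "v \<in> set (interior ws1) \<or> v = last ws1 \<or> v \<in> set (interior ws2)" by auto
    then show ?thesis
    proof (elim disjE)
      assume "v \<in> set (interior ws1)"
      then have "f \<in> S j1 v" unfolding S_def using pf rf by blast
      then have "f \<in> A (j - 1) v" unfolding A_def using rep2 pf by (intro CollectI exI[of _ j1]) auto
      then show ?thesis using rep2 gIn by auto
    next
      assume "v = last ws1"
      then show ?thesis using rep2 pf fIn gIn by auto
    next
      assume "v \<in> set (interior ws2)"
      then have "g \<in> S j2 v" unfolding S_def using pg rg by blast
      then have "g \<in> A (j - 1) v" unfolding A_def using rep2 pg by (intro CollectI exI[of _ j2]) auto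
      moreover have "f \<in> In L (h g)" using fIn rep2 by simp
      ultimately have "(g, f) \<in> Sigma (A (j - 1) v) (\<lambda>g. In L (h g))" by auto
      then show ?thesis using rep2 by (auto simp: image_iff)
    qed
  qed
qed

lemma S_card:
  assumes "1 \<le> j" "j \<le> L" "L \<le> p"
  shows "card (S j v) \<le> Msum L * Msum L + 2 * card (A (j - 1) v) * Msum L"
proof (cases "j = 1")
  case True
  then show ?thesis using S_one by simp
next
  case False
  then have j2: "2 \<le> j" using assms by simp
  let ?M = "Msum L"
  let ?X1 = "In L v \<times> In L v" and ?X2 = "Sigma (A (j - 1) v) (\<lambda>f. In L (h f))"
  let ?X3 = "(\<lambda>(g, f). (f, g)) ` Sigma (A (j - 1) v) (\<lambda>g. In L (h g))"
  have Lp: "L \<le> Suc p" using assms by simp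
  have finA: "finite (A (j - 1) v)" using A_fin assms by simp
  have c1: "card ?X1 \<le> ?M * ?M" using In_card[OF Lp] by (simp add: card_cartesian_product mult_le_mono)
  have c2: "card ?X2 \<le> card (A (j - 1) v) * ?M"
  proof -
    have "card ?X2 = (\<Sum>f\<in>A (j - 1) v. card (In L (h f)))"
      using finA In_card[OF Lp] by (simp add: card_SigmaI)
    also have "\<dots> \<le> (\<Sum>f\<in>A (j - 1) v. ?M)" using In_card[OF Lp] by (intro sum_mono) auto
    finally show ?thesis by simp
  qed
  have c3: "card ?X3 \<le> card (A (j - 1) v) * ?M"
  proof -
    have "card ?X3 \<le> card (Sigma (A (j - 1) v) (\<lambda>g. In L (h g)))" by (rule card_image_le)
        (use finA In_card[OF Lp] in auto)
    also have "\<dots> = (\<Sum>f\<in>A (j - 1) v. card (In L (h f)))"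
      using finA In_card[OF Lp] by (simp add: card_SigmaI)
    also have "\<dots> \<le> (\<Sum>f\<in>A (j - 1) v. ?M)" using In_card[OF Lp] by (intro sum_mono) auto
    finally show ?thesis by simp
  qed
  have finX: "finite (?X1 \<union> ?X2 \<union> ?X3)" using finA In_card[OF Lp] by auto
  have inj: "inj_on \<kappa> (S j v)"
    using kappa_inj[OF j2] assms S_sub by (meson inj_onI le_trans subsetD)
  have "card (S j v) = card (\<kappa> ` S j v)" using inj by (simp add: card_image)
  also have "\<dots> \<le> card (?X1 \<union> ?X2 \<union> ?X3)"
  proof (rule card_mono[OF finX])
    show "\<kappa> ` S j v \<subseteq> ?X1 \<union> ?X2 \<union> ?X3" using S_kappa[OF j2 assms(2,3)] by blast
  qed
  also have "\<dots> \<le> card ?X1 + card ?X2 + card ?X3" by (meson card_Un_le le_trans add_le_mono order_refl)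
  finally show ?thesis using c1 c2 c3 by simp
qed

end



fun U :: "nat \<Rightarrow> nat \<Rightarrow> nat" where
  "U M 0 = 0"
| "U M (Suc j) = U M j + M * M + 2 * U M j * M"

lemma U_bound: "U M j + 1 \<le> (M + 1) ^ (2 * j)"
proof (induction j)
  case 0
  then show ?case by simp
next
  case (Suc j)
  have "U M (Suc j) + 1 \<le> (M + 1) ^ 2 * (U M j + 1)"
    by (simp add: power2_eq_square algebra_simps)
  also have "\<dots> \<le> (M + 1) ^ 2 * (M + 1) ^ (2 * j)" by (rule mult_le_mono2[OF Suc.IH])
  also have "\<dots> = (M + 1) ^ (2 + 2 * j)" by (simp only: power_add)
  also have "2 + 2 * j = 2 * Suc j" by simp
  finally show ?case .
qed

lemma greedy:
  fixes X :: "'a set"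
  assumes "finite X" "\<forall>a\<in>X. card {b\<in>X. b \<noteq> a \<and> C a b} \<le> K" "\<forall>a b. C a b \<longrightarrow> C b a"
  shows "\<exists>T\<subseteq>X. (\<forall>a\<in>T. \<forall>b\<in>T. a \<noteq> b \<longrightarrow> \<not> C a b) \<and> card X \<le> (K + 1) * card T"
  using assms(1,2)
proof (induction "card X" arbitrary: X rule: less_induct)
  case less
  show ?case
  proof (cases "X = {}")
    case True
    then show ?thesis by auto
  next
    case False
    then obtain a where a: "a \<in> X" by auto
    define N where "N = {b\<in>X. b \<noteq> a \<and> C a b}"
    define X' where "X' = X - insert a N"
    have finX': "finite X'" using less.prems unfolding X'_def by auto
    have lt: "card X' < card X" unfolding X'_def using a less.prems(1)
      by (intro psubset_card_mono) auto
    have hyp: "\<forall>c\<in>X'. card {b\<in>X'. b \<noteq> c \<and> C c b} \<le> K"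
    proof
      fix c assume c: "c \<in> X'"
      have "card {b\<in>X'. b \<noteq> c \<and> C c b} \<le> card {b\<in>X. b \<noteq> c \<and> C c b}"
        using less.prems(1) unfolding X'_def by (intro card_mono) auto
      also have "\<dots> \<le> K"
      proof -
        have cX: "c \<in> X" using c unfolding X'_def by simp
        from less.prems(2) cX show ?thesis by (rule bspec)
      qed
      finally show "card {b\<in>X'. b \<noteq> c \<and> C c b} \<le> K" .
    qed
    from less.hyps[OF lt finX' hyp] obtain T' where T': "T' \<subseteq> X'"
      "\<forall>a\<in>T'. \<forall>b\<in>T'. a \<noteq> b \<longrightarrow> \<not> C a b" "card X' \<le> (K + 1) * card T'" by blast
    have aT': "a \<notin> T'" using T'(1) unfolding X'_def by auto
    have finT': "finite T'" using T'(1) finX' finite_subset by blast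
    have indep: "\<forall>x\<in>insert a T'. \<forall>y\<in>insert a T'. x \<noteq> y \<longrightarrow> \<not> C x y"
    proof (intro ballI impI)
      fix x y assume xy: "x \<in> insert a T'" "y \<in> insert a T'" "x \<noteq> y"
      have nb: "\<And>b. b \<in> T' \<Longrightarrow> \<not> C a b" using T'(1) unfolding X'_def N_def by auto
      show "\<not> C x y"
      proof (cases "x = a")
        case True
        then show ?thesis using xy nb by auto
      next
        case False
        show ?thesis
        proof (cases "y = a")
          case True
          then show ?thesis using xy nb False assms(3) by auto
        next
          case False
          then show ?thesis using xy T'(2) \<open>x \<noteq> a\<close> by auto
        qed
      qed
    qed
    have finN: "finite N" using less.prems(1) unfolding N_def by auto
    have "X \<subseteq> X' \<union> insert a N" unfolding X'_def by auto
    then have "card X \<le> card (X' \<union> insert a N)" using finX' finN by (intro card_mono) auto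
    also have "\<dots> \<le> card X' + card (insert a N)" by (rule card_Un_le)
    finally have c1: "card X \<le> card X' + card (insert a N)" .
    have "card N \<le> K" using bspec[OF less.prems(2) a] unfolding N_def .
    moreover have "card (insert a N) \<le> card N + 1" using finN by (simp add: card_insert_if)
    ultimately have "card (insert a N) \<le> K + 1" by linarith
    then have "card X \<le> (K + 1) * card T' + (K + 1)" using T'(3) c1 by linarith
    also have "\<dots> = (K + 1) * card (insert a T')" using aT' finT' by simp
    finally have cX: "card X \<le> (K + 1) * card (insert a T')" .
    have sub: "insert a T' \<subseteq> X" using T'(1) a unfolding X'_def by auto
    show ?thesis by (rule exI[of _ "insert a T'"]) (use sub indep cX in simp)
  qed
qed

lemma subdiv_inD:
  assumes "subdiv_in V E en r B m P Q" "k < m"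
  shows "length (P k) \<ge> 2" "distinct (P k)" "set (P k) \<subseteq> V" "length (Q k) = length (P k) - 1"
    "\<forall>j<length (Q k). Q k ! j \<in> E \<and> en (Q k ! j) = {P k ! j, P k ! Suc j}"
    "hd (P k) \<in> B" "last (P k) \<in> B" "set (interior (P k)) \<inter> B = {}"
    "real (length (interior (P k))) \<le> 2 * r"
proof -
  have all: "\<forall>k<m. length (P k) \<ge> 2 \<and> distinct (P k) \<and> set (P k) \<subseteq> V \<and>
        length (Q k) = length (P k) - 1 \<and>
        (\<forall>j<length (Q k). Q k ! j \<in> E \<and> en (Q k ! j) = {P k ! j, P k ! Suc j}) \<and>
        hd (P k) \<in> B \<and> last (P k) \<in> B \<and> set (interior (P k)) \<inter> B = {} \<and>
        real (length (interior (P k))) \<le> 2 * r"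
    using assms(1) unfolding subdiv_in_def by (elim conjE) assumption
  have "length (P k) \<ge> 2 \<and> distinct (P k) \<and> set (P k) \<subseteq> V \<and>
        length (Q k) = length (P k) - 1 \<and>
        (\<forall>j<length (Q k). Q k ! j \<in> E \<and> en (Q k ! j) = {P k ! j, P k ! Suc j}) \<and>
        hd (P k) \<in> B \<and> last (P k) \<in> B \<and> set (interior (P k)) \<inter> B = {} \<and>
        real (length (interior (P k))) \<le> 2 * r" using spec[OF all, of k] assms(2) by (rule mp)
  then show "length (P k) \<ge> 2" "distinct (P k)" "set (P k) \<subseteq> V" "length (Q k) = length (P k) - 1"
    "\<forall>j<length (Q k). Q k ! j \<in> E \<and> en (Q k ! j) = {P k ! j, P k ! Suc j}"
    "hd (P k) \<in> B" "last (P k) \<in> B" "set (interior (P k)) \<inter> B = {}"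
    "real (length (interior (P k))) \<le> 2 * r" by blast+
qed

lemma subdiv_inD2:
  assumes "subdiv_in V E en r B m P Q" "k < m" "k' < m" "k \<noteq> k'"
  shows "set (interior (P k)) \<inter> set (interior (P k')) = {} \<and> set (Q k) \<inter> set (Q k') = {}"
proof -
  have "\<forall>k<m. \<forall>k'<m. k \<noteq> k' \<longrightarrow>
        set (interior (P k)) \<inter> set (interior (P k')) = {} \<and> set (Q k) \<inter> set (Q k') = {}"
    using assms(1) unfolding subdiv_in_def by (elim conjE) assumption
  then show ?thesis using assms(2-4) by blast
qed

lemma subdiv_inB: "subdiv_in V E en r B m P Q \<Longrightarrow> B \<subseteq> V"
  unfolding subdiv_in_def by (elim conjE)

lemma subdiv_m_le:
  assumes "subdiv_in V E en r B m P Q" "finite E"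
  shows "m \<le> card E"
proof -
  have ne: "\<And>k. k < m \<Longrightarrow> Q k \<noteq> [] \<and> Q k ! 0 \<in> E"
  proof -
    fix k assume k: "k < m"
    then have a: "length (P k) \<ge> 2" "length (Q k) = length (P k) - 1"
      "\<forall>j<length (Q k). Q k ! j \<in> E" using assms(1) unfolding subdiv_in_def by auto
    then have "0 < length (Q k)" by simp
    then show "Q k \<noteq> [] \<and> Q k ! 0 \<in> E" using a(3) by auto
  qed
  have inj: "inj_on (\<lambda>k. Q k ! 0) {..<m}"
  proof (rule inj_onI)
    fix k k' assume kk: "k \<in> {..<m}" "k' \<in> {..<m}" "Q k ! 0 = Q k' ! 0"
    show "k = k'"
    proof (rule ccontr)
      assume "k \<noteq> k'"
      then have "set (Q k) \<inter> set (Q k') = {}" using assms(1) kk unfolding subdiv_in_def by auto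
      moreover have "Q k ! 0 \<in> set (Q k)" by (intro nth_mem) (use ne[of k] kk(1) in auto)
      moreover have "Q k' ! 0 \<in> set (Q k')" by (intro nth_mem) (use ne[of k'] kk(2) in auto)
      ultimately show False using kk by auto
    qed
  qed
  have "card {..<m} \<le> card E" by (rule card_inj_on_le[OF inj]) (use ne assms(2) in auto)
  then show ?thesis by simp
qed

lemma tgrad_bdd:
  assumes "finite E"
  shows "bdd_above (insert 0 {real m / real (card B) | B m P Q. B \<noteq> {} \<and> subdiv_in V E en r B m P Q})"
proof (rule bdd_aboveI[where M = "real (card E)"])
  fix x assume "x \<in> insert 0 {real m / real (card B) | B m P Q. B \<noteq> {} \<and> subdiv_in V E en r B m P Q}"
  then show "x \<le> real (card E)"
  proof
    assume "x = 0" then show ?thesis by simp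
  next
    assume "x \<in> {real m / real (card B) | B m P Q. B \<noteq> {} \<and> subdiv_in V E en r B m P Q}"
    then obtain B m P Q where x: "x = real m / real (card B)" "subdiv_in V E en r B m P Q" by auto
    have "real m / real (card B) \<le> real m"
    proof (cases "card B = 0")
      case True then show ?thesis by simp
    next
      case False
      have "real m / real (card B) \<le> real m / 1" by (rule divide_left_mono) (use False in auto)
      then show ?thesis by simp
    qed
    also have "\<dots> \<le> real (card E)" using subdiv_m_le[OF x(2) assms] by simp
    finally show ?thesis using x by simp
  qed
qed

lemma tgrad_ge:
  assumes "finite E" "B \<noteq> {}" "subdiv_in V E en r B m P Q"
  shows "real m / real (card B) \<le> tgrad_m V E en r"
  unfolding tgrad_m_def using assms by (intro cSup_upper tgrad_bdd) auto

lemma tgrad_nonneg: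
  assumes "finite E"
  shows "0 \<le> tgrad_m V E en r"
  unfolding tgrad_m_def using assms by (intro cSup_upper tgrad_bdd) auto

lemma subdiv_mono:
  assumes "r1 \<le> r2" "subdiv_in V E en r1 B m P Q"
  shows "subdiv_in V E en r2 B m P Q"
proof -
  have "\<forall>k<m. real (length (interior (P k))) \<le> 2 * r2"
  proof (intro allI impI)
    fix k assume "k < m"
    then have "real (length (interior (P k))) \<le> 2 * r1" using assms(2) unfolding subdiv_in_def by blast
    then show "real (length (interior (P k))) \<le> 2 * r2" using assms(1) by linarith
  qed
  then show ?thesis using assms(2) unfolding subdiv_in_def by blast
qed

lemma tgrad_mono:
  assumes "finite E" "r1 \<le> r2"
  shows "tgrad_m V E en r1 \<le> tgrad_m V E en r2"
  unfolding tgrad_m_def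
proof (rule cSup_subset_mono)
  show "bdd_above (insert 0 {real m / real (card B) | B m P Q. B \<noteq> {} \<and> subdiv_in V E en r2 B m P Q})"
    using tgrad_bdd[OF assms(1)] .
  show "insert 0 {real m / real (card B) | B m P Q. B \<noteq> {} \<and> subdiv_in V E en r1 B m P Q}
     \<subseteq> insert 0 {real m / real (card B) | B m P Q. B \<noteq> {} \<and> subdiv_in V E en r2 B m P Q}"
  proof
    fix x assume "x \<in> insert 0 {real m / real (card B) | B m P Q. B \<noteq> {} \<and> subdiv_in V E en r1 B m P Q}"
    then show "x \<in> insert 0 {real m / real (card B) | B m P Q. B \<noteq> {} \<and> subdiv_in V E en r2 B m P Q}"
      using subdiv_mono[OF assms(2)] by blast
  qed
qed simp

lemma set_sub_interior: "set ws \<subseteq> set (interior ws) \<union> {hd ws, last ws}"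
proof (cases ws rule: rev_cases)
  case Nil then show ?thesis by simp
next
  case (snoc ys y)
  then show ?thesis by (cases ys) (auto simp: interior_def)
qed




context sfc begin

lemma A_zero: "A 0 v = {}" unfolding A_def by auto

lemma A_Suc: "A (Suc j) v = A j v \<union> S (Suc j) v"
  unfolding A_def by (auto simp: le_Suc_eq)

lemma A_card: "L \<le> p \<Longrightarrow> j \<le> L \<Longrightarrow> card (A j v) \<le> U (Msum L) j"
proof (induction j)
  case 0
  then show ?case by (simp add: A_zero)
next
  case (Suc j)
  let ?M = "Msum L"
  have IH: "card (A j v) \<le> U ?M j" using Suc by simp
  have "card (A (Suc j) v) \<le> card (A j v) + card (S (Suc j) v)"
    unfolding A_Suc by (rule card_Un_le)
  also have "card (S (Suc j) v) \<le> ?M * ?M + 2 * card (A (Suc j - 1) v) * ?M"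
    using S_card[of "Suc j" L v] Suc.prems by simp
  finally have "card (A (Suc j) v) \<le> card (A j v) + (?M * ?M + 2 * card (A j v) * ?M)" by simp
  also have "\<dots> \<le> U ?M j + (?M * ?M + 2 * U ?M j * ?M)"
    using IH by (intro add_mono mult_le_mono order_refl) auto
  finally show ?case by simp
qed

lemma path_exists:
  assumes "1 \<le> i" "i \<le> p" "e \<in> Es i" "t e \<in> B" "h e \<in> B" "t e \<noteq> h e"
  shows "\<exists>ws es P Q. rep i e ws es \<and> iswalk EG ends P Q \<and> distinct P \<and> 2 \<le> length P \<and>
     length P \<le> i + 1 \<and> hd P \<in> B \<and> last P \<in> B \<and> set (interior P) \<inter> B = {} \<and>
     set (interior P) \<subseteq> set (interior ws) \<and> set Q \<subseteq> set es"
proof -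
  obtain ws es where r: "rep i e ws es" using rep_exists assms by blast
  note rp = rep_props[OF r]
  have lw: "length ws = i + 1" using rp iswalk_length by fastforce
  obtain ps qs where ps: "iswalk EG ends ps qs" "distinct ps" "hd ps = hd ws" "last ps = last ws"
    "set ps \<subseteq> set ws" "set qs \<subseteq> set es" using iswalk_short[of EG ends ws es] rp by blast
  have psne: "ps \<noteq> []" using ps(1) iswalk_nonempty by blast
  then obtain x rest where psx: "ps = x # rest" by (cases ps) auto
  have x: "x = t e" using ps(3) psx rp by simp
  have restne: "rest \<noteq> []"
  proof
    assume "rest = []"
    then have "last ps = t e" using psx x by simp
    then show False using ps(4) rp assms(6) by simp
  qed
  have lastrest: "last rest = h e" using ps(4) psx restne rp by simp
  from iswalk_cut[of EG ends x rest qs B] ps(1) psx restne lastrest assms(5)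
  obtain ws' zs where cut: "rest = ws' @ zs" "ws' \<noteq> []" "last ws' \<in> B" "set (butlast ws') \<inter> B = {}"
    by auto
  define P where "P = x # ws'"
  define Q where "Q = take (length (x # butlast ws')) qs"
  have wsb: "ws' = butlast ws' @ [last ws']" using cut(2) by simp
  have ps_eq: "ps = (x # butlast ws') @ last ws' # zs" using psx cut(1) wsb
    by (metis append_Cons append_assoc append_Cons append_Nil)
  have PW: "iswalk EG ends P Q"
  proof -
    have "iswalk EG ends ((x # butlast ws') @ [last ws']) Q"
      using iswalk_split[of EG ends "x # butlast ws'" "last ws'" zs qs] ps(1) ps_eq unfolding Q_def
      by metis
    moreover have "(x # butlast ws') @ [last ws'] = P" unfolding P_def using wsb by simp
    ultimately show ?thesis by simp
  qed
  have psP: "ps = P @ zs" unfolding P_def using psx cut(1) by simp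
  have dP: "distinct P" using ps(2) psP by simp
  have l2: "2 \<le> length P" unfolding P_def using cut(2) by (cases ws') auto
  have lP: "length P \<le> i + 1"
  proof -
    have "length P \<le> length ps" using psP by simp
    also have "\<dots> = card (set ps)" using ps(2) by (simp add: distinct_card)
    also have "\<dots> \<le> card (set ws)" using ps(5) by (intro card_mono) auto
    also have "\<dots> \<le> length ws" by (rule card_length)
    finally show ?thesis using lw by simp
  qed
  have intP: "interior P = butlast ws'" unfolding P_def interior_def by simp
  have hdP: "hd P \<in> B" unfolding P_def using x assms(4) by simp
  have lastP: "last P \<in> B" unfolding P_def using cut(2,3) by simp
  have intB: "set (interior P) \<inter> B = {}" using intP cut(4) by simp
  have intsub: "set (interior P) \<subseteq> set (interior ws)"
  proof
    fix u assume u: "u \<in> set (interior P)"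
    then have ub: "u \<in> set (butlast ws')" using intP by simp
    have uws: "u \<in> set ws" using ub ps(5) psx cut(1) by (auto dest: in_set_butlastD)
    have d2: "distinct (butlast ws' @ last ws' # zs)" using ps(2) ps_eq by simp
    have "u \<noteq> x" using ps(2) psx cut(1) ub by (auto dest: in_set_butlastD)
    then have u1: "u \<noteq> hd ws" using ps(3) psx by simp
    have "last ps = last (last ws' # zs)" using ps_eq by simp
    moreover have "last (last ws' # zs) \<in> set (last ws' # zs)" by simp
    ultimately have "last ps \<in> set (last ws' # zs)" by simp
    then have "u \<noteq> last ps" using d2 ub by auto
    then have u2: "u \<noteq> last ws" using ps(4) by simp
    show "u \<in> set (interior ws)" using set_sub_interior[of ws] uws u1 u2 by auto
  qed
  have Qsub: "set Q \<subseteq> set es" unfolding Q_def using ps(6) set_take_subset by fastforce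
  show ?thesis using r PW dP l2 lP hdP lastP intB intsub Qsub by blast
qed

end



context sfc begin

lemma S_card_U: "1 \<le> i \<Longrightarrow> i \<le> p \<Longrightarrow> finite (S i u) \<and> card (S i u) \<le> U (Msum i) i"
proof -
  assume a: "1 \<le> i" "i \<le> p"
  have sub: "S i u \<subseteq> A i u" unfolding A_def using a by auto
  have fin: "finite (A i u)" using A_fin a by simp
  have "card (S i u) \<le> card (A i u)" by (rule card_mono[OF fin sub])
  also have "\<dots> \<le> U (Msum i) i" using A_card[of i i u] a by simp
  finally show ?thesis using finite_subset[OF sub fin] by simp
qed

lemma key_bound:
  assumes i: "1 \<le> i" "i \<le> p" and Bne: "B \<noteq> {}"
    and sd: "subdiv_in V (Es i) (\<lambda>e. {t e, h e}) 0 B m P Q"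
  shows "real m / real (card B) \<le> (real ((i + 1) * U (Msum i) i) + 1) * tgrad_m V EG ends ((real i - 1) / 2)"
proof -
  define d where "d = tgrad_m V EG ends ((real i - 1) / 2)"
  define K where "K = (i + 1) * U (Msum i) i"
  define q where "q k = Q k ! 0" for k
  have BV: "B \<subseteq> V" using subdiv_inB[OF sd] .
  have qprop: "q k \<in> Es i \<and> t (q k) \<in> B \<and> h (q k) \<in> B \<and> t (q k) \<noteq> h (q k) \<and> set (Q k) = {q k}"
    if k: "k < m" for k
  proof -
    note s0 = subdiv_inD[OF sd k]
    have s: "length (P k) \<ge> 2" "distinct (P k)" "length (Q k) = length (P k) - 1"
      "\<forall>j<length (Q k). Q k ! j \<in> Es i \<and> {t (Q k ! j), h (Q k ! j)} = {P k ! j, P k ! Suc j}"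
      "hd (P k) \<in> B" "last (P k) \<in> B" "real (length (interior (P k))) \<le> 2 * 0"
      using s0(1,2,4,5,6,7,9) by simp_all
    have "length (P k) = 2" using s(1,7) by (simp add: interior_def)
    then have "\<exists>a b. P k = [a, b]" by (auto simp: numeral_2_eq_2 length_Suc_conv)
    then obtain a b where ab: "P k = [a, b]" by blast
    have lq: "length (Q k) = 1" using s(3) ab by simp
    have q0: "Q k ! 0 \<in> Es i \<and> {t (Q k ! 0), h (Q k ! 0)} = {P k ! 0, P k ! Suc 0}"
      using s(4) lq by simp
    have qE1: "q k \<in> Es i" using q0 unfolding q_def by blast
    have qE2: "{t (q k), h (q k)} = {a, b}" using q0 ab unfolding q_def by simp
    have ab_ne: "a \<noteq> b" using s(2) ab by simp
    have aB: "a \<in> B" and bB: "b \<in> B" using s(5,6) ab by auto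
    have setQ: "set (Q k) = {q k}" using lq unfolding q_def by (cases "Q k") auto
    have tab: "t (q k) \<in> {a, b}" by (subst qE2[symmetric]) simp
    have hab: "h (q k) \<in> {a, b}" by (subst qE2[symmetric]) simp
    have tB: "t (q k) \<in> B" using tab aB bB by auto
    have hB: "h (q k) \<in> B" using hab aB bB by auto
    have neq: "t (q k) \<noteq> h (q k)"
    proof
      assume eq: "t (q k) = h (q k)"
      then have "{a, b} = {t (q k)}" using qE2 by simp
      then have "a \<in> {t (q k)}" "b \<in> {t (q k)}" by (blast, blast)
    then have "a = b" by simp
      then show False using ab_ne by simp
    qed
    show ?thesis using qE1 tB hB neq setQ by simp
  qed
  have qinj: "inj_on q {..<m}"
  proof (rule inj_onI)
    fix k k' assume kk: "k \<in> {..<m}" "k' \<in> {..<m}" "q k = q k'"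
    show "k = k'"
    proof (rule ccontr)
      assume "k \<noteq> k'"
      then have "set (Q k) \<inter> set (Q k') = {}" using subdiv_inD2[OF sd] kk by auto
      moreover have "set (Q k) = {q k}" "set (Q k') = {q k'}" using qprop kk by auto
      ultimately show False using kk(3) by simp
    qed
  qed
  define Phi where "Phi k ws es PP QQ \<longleftrightarrow> rep i (q k) ws es \<and> iswalk EG ends PP QQ \<and> distinct PP \<and> 2 \<le> length PP \<and>
         length PP \<le> i + 1 \<and> hd PP \<in> B \<and> last PP \<in> B \<and> set (interior PP) \<inter> B = {} \<and>
         set (interior PP) \<subseteq> set (interior ws) \<and> set QQ \<subseteq> set es" for k ws es PP QQ
  have ex: "\<exists>ws es PP QQ. Phi k ws es PP QQ" if k: "k < m" for k
  proof -
    have qk: "q k \<in> Es i" "t (q k) \<in> B" "h (q k) \<in> B" "t (q k) \<noteq> h (q k)" using qprop[OF k] by auto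
    show ?thesis unfolding Phi_def by (rule path_exists[OF i qk])
  qed
  define WS where "WS k = (SOME ws. \<exists>es PP QQ. Phi k ws es PP QQ)" for k
  have ex1: "\<exists>es PP QQ. Phi k (WS k) es PP QQ" if k: "k < m" for k
    unfolding WS_def by (rule someI_ex) (rule ex[OF k])
  define ES where "ES k = (SOME es. \<exists>PP QQ. Phi k (WS k) es PP QQ)" for k
  have ex2: "\<exists>PP QQ. Phi k (WS k) (ES k) PP QQ" if k: "k < m" for k
    unfolding ES_def by (rule someI_ex) (rule ex1[OF k])
  define PP where "PP k = (SOME PP. \<exists>QQ. Phi k (WS k) (ES k) PP QQ)" for k
  have ex3: "\<exists>QQ. Phi k (WS k) (ES k) (PP k) QQ" if k: "k < m" for k
    unfolding PP_def by (rule someI_ex) (rule ex2[OF k])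
  define QQ where "QQ k = (SOME QQ. Phi k (WS k) (ES k) (PP k) QQ)" for k
  have ex4: "Phi k (WS k) (ES k) (PP k) (QQ k)" if k: "k < m" for k
    unfolding QQ_def by (rule someI_ex) (rule ex3[OF k])
  have FkR: "rep i (q k) (WS k) (ES k)" and FkW: "iswalk EG ends (PP k) (QQ k)"
    and FkD: "distinct (PP k)" and Fk2: "2 \<le> length (PP k)" and FkL: "length (PP k) \<le> i + 1"
    and FkH: "hd (PP k) \<in> B" and FkT: "last (PP k) \<in> B" and FkB: "set (interior (PP k)) \<inter> B = {}"
    and FkI: "set (interior (PP k)) \<subseteq> set (interior (WS k))" and FkQ: "set (QQ k) \<subseteq> set (ES k)"
    if "k < m" for k
    using ex4[OF that] unfolding Phi_def by blast+
  define conf where "conf k k' = (set (interior (PP k)) \<inter> set (interior (PP k')) \<noteq> {} \<or>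
      set (QQ k) \<inter> set (QQ k') \<noteq> {})" for k k'
  have confsym: "\<forall>a b. conf a b \<longrightarrow> conf b a" unfolding conf_def by blast
  have confS: "q k' \<in> (\<Union>u\<in>set (WS k). S i u)" if kk: "k < m" "k' < m" "k \<noteq> k'" "conf k k'" for k k'
  proof -
    have ra: "rep i (q k) (WS k) (ES k)" by (rule FkR[OF kk(1)])
    have rb: "rep i (q k') (WS k') (ES k')" by (rule FkR[OF kk(2)])
    have wa: "iswalk EG ends (WS k) (ES k)" using rep_props[OF ra] by blast
    have wb: "iswalk EG ends (WS k') (ES k')" and lb: "length (ES k') = i" using rep_props[OF rb] by blast+
    have qk': "q k' \<in> Es i" using qprop[OF kk(2)] by blast
    have memS: "q k' \<in> S i u" if "u \<in> set (interior (WS k'))" for u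
      unfolding S_def using rb qk' that by blast
    from kk(4) show ?thesis unfolding conf_def
    proof (elim disjE)
      assume "set (interior (PP k)) \<inter> set (interior (PP k')) \<noteq> {}"
      then obtain u where u: "u \<in> set (interior (PP k))" "u \<in> set (interior (PP k'))" by blast
      have "u \<in> set (interior (WS k'))" using u(2) FkI[OF kk(2)] by blast
      then have "q k' \<in> S i u" by (rule memS)
      moreover have "u \<in> set (WS k)" using u(1) FkI[OF kk(1)] interior_sub[of "WS k"] by blast
      ultimately show ?thesis by blast
    next
      assume "set (QQ k) \<inter> set (QQ k') \<noteq> {}"
      then obtain \<epsilon> where "\<epsilon> \<in> set (QQ k)" "\<epsilon> \<in> set (QQ k')" by blast
      then have eps: "\<epsilon> \<in> set (ES k)" "\<epsilon> \<in> set (ES k')" using FkQ[OF kk(1)] FkQ[OF kk(2)] by blast+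
      show ?thesis
      proof (cases "i = 1")
        case True
        have "ES k = [q k]" using rep_one ra True by blast
        moreover have "ES k' = [q k']" using rep_one rb True by blast
        ultimately have "q k = q k'" using eps by simp
        then have "k = k'" using inj_onD[OF qinj] kk(1,2) by simp
        then show ?thesis using kk(3) by simp
      next
        case False
        from eps(2) obtain jj where jj: "jj < length (ES k')" "ES k' ! jj = \<epsilon>" by (auto simp: in_set_conv_nth)
        have en: "ends \<epsilon> = {WS k' ! jj, WS k' ! Suc jj}" using iswalk_nth[OF wb] jj by auto
        have lws: "length (WS k') = Suc i" using iswalk_length[OF wb] lb by simp
        have i2: "2 \<le> i" using False i by simp
        have u_ex: "\<exists>u. u \<in> ends \<epsilon> \<and> u \<in> set (interior (WS k'))"
        proof (cases "jj = 0")
          case True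
          have len: "0 < length (interior (WS k'))" unfolding interior_def using lws i2 by simp
          have "interior (WS k') ! 0 = WS k' ! 1" unfolding interior_def using lws i2
            by (simp add: nth_butlast nth_tl)
          then have "WS k' ! 1 \<in> set (interior (WS k'))" using nth_mem[OF len] by simp
          then show ?thesis using en True by auto
        next
          case False
          have len: "jj - 1 < length (interior (WS k'))" unfolding interior_def using lws False jj lb by simp
          have "interior (WS k') ! (jj - 1) = WS k' ! jj" unfolding interior_def using lws False jj lb
            by (simp add: nth_butlast nth_tl)
          then have "WS k' ! jj \<in> set (interior (WS k'))" using nth_mem[OF len] by simp
          then show ?thesis using en by auto
        qed
        then obtain u where u: "u \<in> ends \<epsilon>" "u \<in> set (interior (WS k'))" by blast
        have "q k' \<in> S i u" using memS u(2) by blast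
        moreover have "u \<in> set (WS k)" using iswalk_edge_ends[OF wa eps(1)] u(1) by blast
        ultimately show ?thesis by blast
      qed
    qed
  qed
  have confcard: "\<forall>k\<in>{..<m}. card {k'\<in>{..<m}. k' \<noteq> k \<and> conf k k'} \<le> K"
  proof
    fix k assume k: "k \<in> {..<m}"
    let ?Y = "\<Union>u\<in>set (WS k). S i u"
    have finY: "finite ?Y" using S_card_U i by auto
    have "card {k'\<in>{..<m}. k' \<noteq> k \<and> conf k k'} \<le> card ?Y"
    proof (rule card_inj_on_le[OF _ _ finY])
      show "inj_on q {k'\<in>{..<m}. k' \<noteq> k \<and> conf k k'}" using qinj by (rule inj_on_subset) auto
      show "q ` {k'\<in>{..<m}. k' \<noteq> k \<and> conf k k'} \<subseteq> ?Y" using confS k by auto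
    qed
    also have "\<dots> \<le> (\<Sum>u\<in>set (WS k). card (S i u))" by (rule card_UN_le) simp
    also have "\<dots> \<le> (\<Sum>u\<in>set (WS k). U (Msum i) i)" using S_card_U i by (intro sum_mono) auto
    also have "\<dots> = card (set (WS k)) * U (Msum i) i" by simp
    also have "\<dots> \<le> length (WS k) * U (Msum i) i" by (intro mult_le_mono1 card_length)
    also have "length (WS k) = i + 1"
    proof -
      have ra: "rep i (q k) (WS k) (ES k)" using FkR k by simp
      have "iswalk EG ends (WS k) (ES k)" "length (ES k) = i" using rep_props[OF ra] by blast+
      then show ?thesis using iswalk_length by fastforce
    qed
    finally show "card {k'\<in>{..<m}. k' \<noteq> k \<and> conf k k'} \<le> K" unfolding K_def .
  qed
  from greedy[where X="{..<m}" and K=K and C=conf] confcard confsym obtain T where T: "T \<subseteq> {..<m}"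
    "\<forall>a\<in>T. \<forall>b\<in>T. a \<noteq> b \<longrightarrow> \<not> conf a b" "card {..<m} \<le> (K + 1) * card T" by auto
  have finT: "finite T" using T(1) finite_subset by blast
  obtain g where g: "bij_betw g {0..<card T} T" using ex_bij_betw_nat_finite[OF finT] by blast
  have gT: "g j \<in> T" "g j < m" if "j < card T" for j
  proof -
    show "g j \<in> T" using bij_betwE[OF g] that by auto
    then show "g j < m" using T(1) by auto
  qed
  have part1: "\<forall>j<card T. length (PP (g j)) \<ge> 2 \<and> distinct (PP (g j)) \<and> set (PP (g j)) \<subseteq> V \<and>
        length (QQ (g j)) = length (PP (g j)) - 1 \<and>
        (\<forall>ja<length (QQ (g j)). QQ (g j) ! ja \<in> EG \<and> ends (QQ (g j) ! ja) = {PP (g j) ! ja, PP (g j) ! Suc ja}) \<and>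
        hd (PP (g j)) \<in> B \<and> last (PP (g j)) \<in> B \<and> set (interior (PP (g j))) \<inter> B = {} \<and>
        real (length (interior (PP (g j)))) \<le> 2 * ((real i - 1) / 2)"
  proof (intro allI impI)
    fix j assume j: "j < card T"
    have gj: "g j < m" by (rule gT(2)[OF j])
    have w: "iswalk EG ends (PP (g j)) (QQ (g j))" by (rule FkW[OF gj])
    have lq: "length (PP (g j)) = Suc (length (QQ (g j)))" using iswalk_length[OF w] .
    have f1: "2 \<le> length (PP (g j))" by (rule Fk2[OF gj])
    have f2: "distinct (PP (g j))" by (rule FkD[OF gj])
    have f3: "hd (PP (g j)) \<in> B" by (rule FkH[OF gj])
    have f4: "last (PP (g j)) \<in> B" by (rule FkT[OF gj])
    have f5: "set (interior (PP (g j))) \<inter> B = {}" by (rule FkB[OF gj])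
    have f6: "length (QQ (g j)) = length (PP (g j)) - 1" using lq by simp
    have "QQ (g j) \<noteq> []" using lq Fk2[OF gj] by auto
    then have f7: "set (PP (g j)) \<subseteq> V"
      using iswalk_set[OF w] endsV by blast
    have f8: "\<forall>ja<length (QQ (g j)). QQ (g j) ! ja \<in> EG \<and> ends (QQ (g j) ! ja) = {PP (g j) ! ja, PP (g j) ! Suc ja}"
      using iswalk_nth[OF w] .
    have "length (interior (PP (g j))) = length (PP (g j)) - 2" unfolding interior_def by simp
    then have f9: "real (length (interior (PP (g j)))) \<le> 2 * ((real i - 1) / 2)" using Fk2[OF gj] FkL[OF gj] by auto
    show "length (PP (g j)) \<ge> 2 \<and> distinct (PP (g j)) \<and> set (PP (g j)) \<subseteq> V \<and>
        length (QQ (g j)) = length (PP (g j)) - 1 \<and>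
        (\<forall>ja<length (QQ (g j)). QQ (g j) ! ja \<in> EG \<and> ends (QQ (g j) ! ja) = {PP (g j) ! ja, PP (g j) ! Suc ja}) \<and>
        hd (PP (g j)) \<in> B \<and> last (PP (g j)) \<in> B \<and> set (interior (PP (g j))) \<inter> B = {} \<and>
        real (length (interior (PP (g j)))) \<le> 2 * ((real i - 1) / 2)"
      using f1 f2 f3 f4 f5 f6 f7 f8 f9 by (intro conjI)
  qed
  have part2: "\<forall>j<card T. \<forall>j'<card T. j \<noteq> j' \<longrightarrow>
        set (interior (PP (g j))) \<inter> set (interior (PP (g j'))) = {} \<and> set (QQ (g j)) \<inter> set (QQ (g j')) = {}"
  proof (intro allI impI)
    fix j j' assume jj: "j < card T" "j' < card T" "j \<noteq> j'"
    have "g j \<noteq> g j'" using inj_onD[OF bij_betw_imp_inj_on[OF g]] jj by auto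
    then have "\<not> conf (g j) (g j')" using T(2) gT jj by blast
    then show "set (interior (PP (g j))) \<inter> set (interior (PP (g j'))) = {} \<and> set (QQ (g j)) \<inter> set (QQ (g j')) = {}"
      unfolding conf_def by auto
  qed
  have sdG: "subdiv_in V EG ends ((real i - 1) / 2) B (card T) (\<lambda>j. PP (g j)) (\<lambda>j. QQ (g j))"
    unfolding subdiv_in_def using BV part1 part2 by (intro conjI)
  have cB: "0 < card B" using Bne BV finV by (meson card_gt_0_iff finite_subset)
  have "real (card T) / real (card B) \<le> d" unfolding d_def using tgrad_ge[OF finEG Bne sdG] .
  then have cT: "real (card T) \<le> d * real (card B)" using cB by (simp add: divide_le_eq)
  have mT: "m \<le> (K + 1) * card T" using T(3) by simp
  have "real m \<le> real ((K + 1) * card T)" using mT by (simp only: of_nat_le_iff)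
  also have "\<dots> = (real K + 1) * real (card T)" by (simp add: algebra_simps)
  also have "\<dots> \<le> (real K + 1) * (d * real (card B))" using cT by (intro mult_left_mono) auto
  finally have "real m \<le> (real K + 1) * d * real (card B)" by (simp add: mult.assoc)
  then show ?thesis unfolding K_def d_def using cB by (simp add: divide_le_eq)
qed

end



context sfc begin

lemma main_bound:
  assumes i: "1 \<le> i" "i \<le> p"
  shows "real (max_indeg V (Es i) h) \<le>
    (real ((i + 1) * U (Msum i) i) + 1) * tgrad_m V EG ends ((real i - 1) / 2) + 1"
proof -
  define c where "c = (real ((i + 1) * U (Msum i) i) + 1) * tgrad_m V EG ends ((real i - 1) / 2)"
  have c0: "0 \<le> c" unfolding c_def using tgrad_nonneg[OF finEG, of V ends "(real i - 1) / 2"]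
    by (intro mult_nonneg_nonneg) simp_all
  have tg: "tgrad_m V (Es i) (\<lambda>e. {t e, h e}) 0 \<le> c"
    unfolding tgrad_m_def
  proof (rule cSup_least)
    show "insert 0 {real m / real (card B) | B m P Q. B \<noteq> {} \<and> subdiv_in V (Es i) (\<lambda>e. {t e, h e}) 0 B m P Q} \<noteq> {}"
      by simp
  next
    fix x assume x: "x \<in> insert 0 {real m / real (card B) | B m P Q. B \<noteq> {} \<and> subdiv_in V (Es i) (\<lambda>e. {t e, h e}) 0 B m P Q}"
    show "x \<le> c"
    proof (cases "x = 0")
      case True
      then show ?thesis using c0 by simp
    next
      case False
      then obtain B m P Q where x: "x = real m / real (card B)" "B \<noteq> {}"
        "subdiv_in V (Es i) (\<lambda>e. {t e, h e}) 0 B m P Q" using x by blast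
      show ?thesis unfolding x(1) c_def by (rule key_bound[OF i x(2,3)])
    qed
  qed
  have "real (max_indeg V (Es i) h) = real_of_int (int (max_indeg V (Es i) h))" by simp
  also have "\<dots> = real_of_int \<lceil>tgrad_m V (Es i) (\<lambda>e. {t e, h e}) 0\<rceil>" using stdeq[OF i] by simp
  also have "\<dots> \<le> tgrad_m V (Es i) (\<lambda>e. {t e, h e}) 0 + 1" by (rule of_int_ceiling_le_add_one)
  also have "\<dots> \<le> c + 1" using tg by simp
  finally show ?thesis unfolding c_def .
qed

lemma Msum_real: "real (Msum i) = (\<Sum>k\<in>{1..<i}. real (max_indeg V (Es k) h))"
  unfolding Msum_def by simp

end

definition Good :: "nat \<Rightarrow> real \<Rightarrow> nat \<Rightarrow> bool" where
  "Good i c N \<longleftrightarrow> (\<forall>(V :: nat set) (EG :: nat set) (ends :: nat \<Rightarrow> nat set) (t :: nat \<Rightarrow> nat) (h :: nat \<Rightarrow> nat)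
      (Es :: nat \<Rightarrow> nat set) (\<kappa> :: nat \<Rightarrow> nat \<times> nat) (p :: nat).
    standard_fc V EG ends t h Es \<kappa> p \<and> i \<le> p \<longrightarrow>
      real (max_indeg V (Es i) h) \<le> c * (tgrad_m V EG ends ((real i - 1) / 2) + 1) ^ N)"

lemma U_real: "real (U M j) + 1 \<le> (real M + 1) ^ (2 * j)"
proof -
  have "U M j + 1 \<le> (M + 1) ^ (2 * j)" by (rule U_bound)
  then have "real (U M j + 1) \<le> real ((M + 1) ^ (2 * j))" by (simp only: of_nat_le_iff)
  then show ?thesis by (simp only: of_nat_add of_nat_power of_nat_1)
qed

lemma good_ex: "1 \<le> i \<Longrightarrow> \<exists>c N. 0 \<le> c \<and> Good i c N"
proof (induction i rule: less_induct)
  case (less i)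
  have "\<forall>k\<in>{1..<i}. \<exists>cN. 0 \<le> fst cN \<and> Good k (fst cN) (snd cN)"
  proof
    fix k assume "k \<in> {1..<i}"
    then obtain c N where "0 \<le> c" "Good k c N" using less.IH[of k] by auto
    then show "\<exists>cN. 0 \<le> fst cN \<and> Good k (fst cN) (snd cN)" by (intro exI[of _ "(c, N)"]) simp
  qed
  then obtain F where F: "\<And>k. k \<in> {1..<i} \<Longrightarrow> 0 \<le> fst (F k) \<and> Good k (fst (F k)) (snd (F k))"
    using bchoice by metis
  define C where "C = (\<Sum>k\<in>{1..<i}. fst (F k))"
  define N0 where "N0 = (\<Sum>k\<in>{1..<i}. snd (F k))"
  have C0: "0 \<le> C" unfolding C_def using F by (intro sum_nonneg) auto
  define cc where "cc = real (i + 1) * (C + 1) ^ (2 * i)"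
  have cc1: "1 \<le> cc"
  proof -
    have "1 \<le> real (i + 1)" by simp
    moreover have "1 \<le> (C + 1) ^ (2 * i)" using C0 by (intro one_le_power) simp
    ultimately have "1 * 1 \<le> real (i + 1) * (C + 1) ^ (2 * i)" by (intro mult_mono) auto
    then show ?thesis unfolding cc_def by simp
  qed
  show ?case
  proof (intro exI conjI)
    show "0 \<le> cc" using cc1 by simp
    show "Good i cc (2 * i * N0 + 1)"
      unfolding Good_def
    proof (intro allI impI, elim conjE)
      fix V :: "nat set" and EG :: "nat set" and ends :: "nat \<Rightarrow> nat set" and t h :: "nat \<Rightarrow> nat"
        and Es :: "nat \<Rightarrow> nat set" and \<kappa> :: "nat \<Rightarrow> nat \<times> nat" and p :: nat
      assume sfcA: "standard_fc V EG ends t h Es \<kappa> p" and ip: "i \<le> p"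
      interpret S: sfc V EG ends t h Es \<kappa> p by unfold_locales (rule sfcA)
      define d where "d = tgrad_m V EG ends ((real i - 1) / 2)"
      have d0: "0 \<le> d" unfolding d_def by (rule tgrad_nonneg[OF S.finEG])
      define M where "M = S.Msum i"
      have lowk: "real (max_indeg V (Es k) h) \<le> fst (F k) * (d + 1) ^ N0" if k: "k \<in> {1..<i}" for k
      proof -
        have Fk: "0 \<le> fst (F k)" "Good k (fst (F k)) (snd (F k))" using F[OF k] by auto
        define dk where "dk = tgrad_m V EG ends ((real k - 1) / 2)"
        have dk0: "0 \<le> dk" unfolding dk_def by (rule tgrad_nonneg[OF S.finEG])
        have dkd: "dk \<le> d" unfolding dk_def d_def using k by (intro tgrad_mono[OF S.finEG]) auto
        have "real (max_indeg V (Es k) h) \<le> fst (F k) * (dk + 1) ^ snd (F k)"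
          unfolding dk_def by (rule Fk(2)[unfolded Good_def, rule_format]) (use sfcA ip k in auto)
        also have "\<dots> \<le> fst (F k) * (d + 1) ^ snd (F k)"
          using dkd dk0 Fk(1) by (intro mult_left_mono power_mono) auto
        also have "\<dots> \<le> fst (F k) * (d + 1) ^ N0"
        proof -
          have "snd (F k) \<le> N0" unfolding N0_def using k
            by (intro member_le_sum) auto
          then have "(d + 1) ^ snd (F k) \<le> (d + 1) ^ N0" using d0 by (intro power_increasing) auto
          then show ?thesis using Fk(1) by (intro mult_left_mono) auto
        qed
        finally show ?thesis .
      qed
      have Mb: "real M \<le> C * (d + 1) ^ N0"
      proof -
        have "real M = (\<Sum>k\<in>{1..<i}. real (max_indeg V (Es k) h))" unfolding M_def by (rule S.Msum_real)
        also have "\<dots> \<le> (\<Sum>k\<in>{1..<i}. fst (F k) * (d + 1) ^ N0)" using lowk by (intro sum_mono) auto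
        also have "\<dots> = C * (d + 1) ^ N0" unfolding C_def by (simp add: sum_distrib_right)
        finally show ?thesis .
      qed
      have dp1: "1 \<le> (d + 1) ^ N0" using d0 by (intro one_le_power) simp
      have M1: "real M + 1 \<le> (C + 1) * (d + 1) ^ N0" using Mb dp1 by (simp add: algebra_simps)
      have Mpow: "(real M + 1) ^ (2 * i) \<le> (C + 1) ^ (2 * i) * (d + 1) ^ (2 * i * N0)"
      proof -
        have "(real M + 1) ^ (2 * i) \<le> ((C + 1) * (d + 1) ^ N0) ^ (2 * i)"
          using M1 by (intro power_mono) auto
        also have "\<dots> = (C + 1) ^ (2 * i) * (d + 1) ^ (2 * i * N0)"
          by (simp add: power_mult_distrib power_mult[symmetric] mult.commute)
        finally show ?thesis .
      qed
      define X where "X = cc * (d + 1) ^ (2 * i * N0)"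
      have "1 \<le> (d + 1) ^ (2 * i * N0)" using d0 by (intro one_le_power) simp
      then have "1 * 1 \<le> cc * (d + 1) ^ (2 * i * N0)" using cc1 by (intro mult_mono) auto
      then have X1: "1 \<le> X" unfolding X_def by simp
      have A: "real ((i + 1) * U M i) + 1 \<le> X"
      proof -
        have "real ((i + 1) * U M i) + 1 \<le> real (i + 1) * (real (U M i) + 1)" by (simp add: algebra_simps)
        also have "\<dots> \<le> real (i + 1) * (real M + 1) ^ (2 * i)" using U_real[of M i] by (intro mult_left_mono) auto
        also have "\<dots> \<le> real (i + 1) * ((C + 1) ^ (2 * i) * (d + 1) ^ (2 * i * N0))"
          using Mpow by (intro mult_left_mono) auto
        also have "\<dots> = X" unfolding X_def cc_def by (simp add: mult.assoc)
        finally show ?thesis .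
      qed
      have "real (max_indeg V (Es i) h) \<le> (real ((i + 1) * U M i) + 1) * d + 1"
        using S.main_bound[OF less.prems ip] unfolding M_def d_def .
      also have "\<dots> \<le> X * d + 1" using A d0 by (intro add_right_mono mult_right_mono) auto
      also have "\<dots> \<le> X * (d + 1)" using X1 by (simp add: algebra_simps)
      also have "\<dots> = cc * (d + 1) ^ (2 * i * N0 + 1)" unfolding X_def by (simp add: mult.assoc)
      finally show "real (max_indeg V (Es i) h) \<le> cc * (tgrad_m V EG ends ((real i - 1) / 2) + 1) ^ (2 * i * N0 + 1)"
        unfolding d_def .
    qed
  qed
qed

theorem mainTheorem14:
  fixes i :: nat
  assumes "i \<ge> 1"
  shows "\<exists>R :: real poly. \<forall>(V :: nat set) (EG :: nat set) ends t h Es \<kappa> p.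
           standard_fc V EG ends t h Es \<kappa> p \<and> i \<le> p \<longrightarrow>
           real (max_indeg V (Es i) h) \<le> poly R (tgrad_m V EG ends ((real i - 1) / 2))"
proof -
  obtain c N where cN: "0 \<le> c" "Good i c N" using good_ex assms by blast
  have pR: "poly (smult c ([:1, 1:] ^ N)) x = c * (x + 1) ^ N" for x :: real
    by (simp add: poly_power add.commute)
  show ?thesis
  proof (rule exI[of _ "smult c ([:1, 1:] ^ N)"], intro allI impI)
    fix V :: "nat set" and EG :: "nat set" and ends :: "nat \<Rightarrow> nat set" and t h :: "nat \<Rightarrow> nat"
        and Es :: "nat \<Rightarrow> nat set" and \<kappa> :: "nat \<Rightarrow> nat \<times> nat" and p :: nat
    assume a: "standard_fc V EG ends t h Es \<kappa> p \<and> i \<le> p"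
    have "real (max_indeg V (Es i) h) \<le> c * (tgrad_m V EG ends ((real i - 1) / 2) + 1) ^ N"
      using cN(2)[unfolded Good_def, rule_format, OF a] .
    also have "\<dots> = poly (smult c ([:1, 1:] ^ N)) (tgrad_m V EG ends ((real i - 1) / 2))"
      by (rule pR[symmetric])
    finally show "real (max_indeg V (Es i) h) \<le> poly (smult c ([:1, 1:] ^ N)) (tgrad_m V EG ends ((real i - 1) / 2))" .
  qed
qed


end
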